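(* In the finite-sample setting, run the evaluation algorithm with $\rho_t=\widehat d_t^{\pi^\beta}$ and the finite-sample matrix estimation subroutine. There exists an absolute constant $C>0$ such that for $\delta\in(0,1)$, with probability at least $1-\delta$, \[ \big|\langle\rho_t,Z_t-Y_t\rangle\big|\le CH\sqrt{\frac{S\log(HS/\delta)}{K}}\qquad\text{for all }t\in[H]. \]
   Context: MDP: finite state space $\mathcal S$ ($S=|\mathcal S|$), finite action space $\mathcal A$ ($A=|\mathcal A|$), horizon $H$, transitions $P_t(\cdot\mid s,a)$, rewards $r_t:\mathcal S\times\mathcal A\to[0,1]$, initial distribution $\mu_1$; $\pi^\theta$ target and $\pi^\beta$ behavior policy. Functions on $\mathcal S\times\mathcal A$ are $S\times A$ matrices; $\langle X,Y\rangle=\sum_{s,a}X(s,a)Y(s,a)$. Finite-sample setting: $K$ independent trajectories $(s_t^k,a_t^k,r_t^k)$ generated by $\pi^\beta$; $n_t(s,a)=\sum_k\mathbb 1\{(s_t^k,a_t^k)=(s,a)\}$, $\widehat d_t^{\pi^\beta}=n_t/K$, $\widehat P_t(s'\mid s,a)=\frac1{n_t(s,a)}\sum_k\mathbb 1\{(s_t^k,a_t^k,s_{t+1}^k)=(s,a,s')\}$ for $n_t(s,a)>0$. Algorithm: $\widehat Q_{H+1}=0$; for $t=H,\dots,1$: $Z_t(s,a)=r_t(s,a)+\sum_{s',a'}\widehat P_t(s'\mid s,a)\pi^\theta_{t+1}(a'\mid s')\widehat Q_{t+1}(s',a')$ for $(s,a)\in\operatorname{supp}(\rho_t)$; $Y_t(s,a)=r_t(s,a)+\sum_{s',a'}P_t(s'\mid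 s,a)\pi^\theta_{t+1}(a'\mid s')\widehat Q_{t+1}(s',a')$; $\widehat Q_t$ a minimizer of $\|M\|_{\max}=\min_{M=UV^\top}\|U\|_{2\to\infty}\|V\|_{2\to\infty}$ ($\|\cdot\|_{2\to\infty}$ maximum row Euclidean norm) subject to $|\langle\rho_t,M-Z_t\rangle|\le|\langle\rho_t,Z_t-Y_t\rangle|$ and $\max_{s,a}|M(s,a)|\le H-t+1$. *)

theory Defs
  imports "HOL-Probability.Probability"
begin

(* States are 0..<S, actions are 0..<A (natural numbers), time steps 1..H.
   A trajectory is a list of (state, action) pairs for t = 1..H together with
   the final state s_{H+1}. *)

type_synonym traj = "(nat \<times> nat) list \<times> nat"

fun gen_traj :: "(nat \<Rightarrow> nat \<Rightarrow> nat pmf) \<Rightarrow> (nat \<Rightarrow> nat \<Rightarrow> nat \<Rightarrow> nat pmf)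
    \<Rightarrow> nat \<Rightarrow> nat \<Rightarrow> nat \<Rightarrow> traj pmf" where
  "gen_traj pb P t 0 s = return_pmf ([], s)"
| "gen_traj pb P t (Suc n) s =
     bind_pmf (pb t s) (\<lambda>a. bind_pmf (P t s a) (\<lambda>s'.
       map_pmf (\<lambda>(xs, f). ((s, a) # xs, f)) (gen_traj pb P (Suc t) n s')))"

definition traj_pmf :: "nat pmf \<Rightarrow> (nat \<Rightarrow> nat \<Rightarrow> nat pmf) \<Rightarrow> (nat \<Rightarrow> nat \<Rightarrow> nat \<Rightarrow> nat pmf)
    \<Rightarrow> nat \<Rightarrow> traj pmf" where
  "traj_pmf mu pb P H = bind_pmf mu (\<lambda>s. gen_traj pb P 1 H s)"

definition sample_pmf :: "nat \<Rightarrow> nat pmf \<Rightarrow> (nat \<Rightarrow> nat \<Rightarrow> nat pmf) \<Rightarrow> (nat \<Rightarrow> nat \<Rightarrow> nat \<Rightarrow> nat pmf)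
    \<Rightarrow> nat \<Rightarrow> (nat \<Rightarrow> traj) pmf" where
  "sample_pmf K mu pb P H = Pi_pmf {..<K} ([], 0) (\<lambda>_. traj_pmf mu pb P H)"

(* s_t and a_t of a trajectory, for t >= 1 *)
definition st :: "traj \<Rightarrow> nat \<Rightarrow> nat" where
  "st \<tau> t = (if t \<le> length (fst \<tau>) then fst (fst \<tau> ! (t - 1)) else snd \<tau>)"

definition act :: "traj \<Rightarrow> nat \<Rightarrow> nat" where
  "act \<tau> t = snd (fst \<tau> ! (t - 1))"

definition cnt :: "(nat \<Rightarrow> traj) \<Rightarrow> nat \<Rightarrow> nat \<Rightarrow> nat \<Rightarrow> nat \<Rightarrow> nat" where
  "cnt D K t s a = card {k \<in> {..<K}. st (D k) t = s \<and> act (D k) t = a}"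

definition cnt3 :: "(nat \<Rightarrow> traj) \<Rightarrow> nat \<Rightarrow> nat \<Rightarrow> nat \<Rightarrow> nat \<Rightarrow> nat \<Rightarrow> nat" where
  "cnt3 D K t s a s' = card {k \<in> {..<K}. st (D k) t = s \<and> act (D k) t = a \<and> st (D k) (Suc t) = s'}"

definition rho :: "(nat \<Rightarrow> traj) \<Rightarrow> nat \<Rightarrow> nat \<Rightarrow> nat \<Rightarrow> nat \<Rightarrow> real" where
  "rho D K t s a = real (cnt D K t s a) / real K"

(* hat P_t(s'|s,a), meaningful when n_t(s,a) > 0 *)
definition Phat :: "(nat \<Rightarrow> traj) \<Rightarrow> nat \<Rightarrow> nat \<Rightarrow> nat \<Rightarrow> nat \<Rightarrow> nat \<Rightarrow> real" where
  "Phat D K t s a s' = real (cnt3 D K t s a s') / real (cnt D K t s a)"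

definition inner_SA :: "nat \<Rightarrow> nat \<Rightarrow> (nat \<Rightarrow> nat \<Rightarrow> real) \<Rightarrow> (nat \<Rightarrow> nat \<Rightarrow> real) \<Rightarrow> real" where
  "inner_SA S A X Y = (\<Sum>s<S. \<Sum>a<A. X s a * Y s a)"

definition Vfun :: "nat \<Rightarrow> (nat \<Rightarrow> nat \<Rightarrow> nat pmf) \<Rightarrow> nat \<Rightarrow> (nat \<Rightarrow> nat \<Rightarrow> real) \<Rightarrow> nat \<Rightarrow> real" where
  "Vfun A pt t Q s' = (\<Sum>a'<A. pmf (pt t s') a' * Q s' a')"

(* Z_t, defined on supp(rho_t) = {n_t > 0}; set to 0 off the support (irrelevant) *)
definition Zmat :: "nat \<Rightarrow> nat \<Rightarrow> (nat \<Rightarrow> nat \<Rightarrow> nat \<Rightarrow> real) \<Rightarrow> (nat \<Rightarrow> nat \<Rightarrow> nat pmf)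
    \<Rightarrow> (nat \<Rightarrow> traj) \<Rightarrow> nat \<Rightarrow> nat \<Rightarrow> (nat \<Rightarrow> nat \<Rightarrow> real) \<Rightarrow> nat \<Rightarrow> nat \<Rightarrow> real" where
  "Zmat S A r pt D K t Qn s a =
     (if cnt D K t s a > 0
      then r t s a + (\<Sum>s'<S. Phat D K t s a s' * Vfun A pt (Suc t) Qn s')
      else 0)"

definition Ymat :: "nat \<Rightarrow> nat \<Rightarrow> (nat \<Rightarrow> nat \<Rightarrow> nat \<Rightarrow> real) \<Rightarrow> (nat \<Rightarrow> nat \<Rightarrow> nat pmf)
    \<Rightarrow> (nat \<Rightarrow> nat \<Rightarrow> nat \<Rightarrow> nat pmf) \<Rightarrow> nat \<Rightarrow> (nat \<Rightarrow> nat \<Rightarrow> real) \<Rightarrow> nat \<Rightarrow> nat \<Rightarrow> real" where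
  "Ymat S A r pt P t Qn s a =
     r t s a + (\<Sum>s'<S. pmf (P t s a) s' * Vfun A pt (Suc t) Qn s')"

definition row_norm :: "nat \<Rightarrow> nat \<Rightarrow> (nat \<Rightarrow> nat \<Rightarrow> real) \<Rightarrow> real" where
  "row_norm n k U = (MAX i \<in> {..<n}. sqrt (\<Sum>j<k. (U i j)\<^sup>2))"

definition max_norm :: "nat \<Rightarrow> nat \<Rightarrow> (nat \<Rightarrow> nat \<Rightarrow> real) \<Rightarrow> real" where
  "max_norm S A M = Inf {row_norm S k U * row_norm A k V | k U V.
      \<forall>s<S. \<forall>a<A. M s a = (\<Sum>j<k. U s j * V a j)}"

definition feasible :: "nat \<Rightarrow> nat \<Rightarrow> nat \<Rightarrow> nat \<Rightarrow> (nat \<Rightarrow> nat \<Rightarrow> real) \<Rightarrow> (nat \<Rightarrow> nat \<Rightarrow> real)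
    \<Rightarrow> (nat \<Rightarrow> nat \<Rightarrow> real) \<Rightarrow> (nat \<Rightarrow> nat \<Rightarrow> real) \<Rightarrow> bool" where
  "feasible S A H t \<rho> Z Y M \<longleftrightarrow>
     \<bar>inner_SA S A \<rho> (\<lambda>s a. M s a - Z s a)\<bar> \<le> \<bar>inner_SA S A \<rho> (\<lambda>s a. Z s a - Y s a)\<bar> \<and>
     (\<forall>s<S. \<forall>a<A. \<bar>M s a\<bar> \<le> real H - real t + 1)"

definition is_minimizer :: "nat \<Rightarrow> nat \<Rightarrow> nat \<Rightarrow> nat \<Rightarrow> (nat \<Rightarrow> nat \<Rightarrow> real) \<Rightarrow> (nat \<Rightarrow> nat \<Rightarrow> real)
    \<Rightarrow> (nat \<Rightarrow> nat \<Rightarrow> real) \<Rightarrow> (nat \<Rightarrow> nat \<Rightarrow> real) \<Rightarrow> bool" where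
  "is_minimizer S A H t \<rho> Z Y M \<longleftrightarrow>
     feasible S A H t \<rho> Z Y M \<and>
     (\<forall>M'. feasible S A H t \<rho> Z Y M' \<longrightarrow> max_norm S A M \<le> max_norm S A M')"

(* Q is a possible output of the evaluation algorithm with rho_t = hat d_t on data D *)
definition valid_run :: "nat \<Rightarrow> nat \<Rightarrow> nat \<Rightarrow> (nat \<Rightarrow> nat \<Rightarrow> nat \<Rightarrow> real) \<Rightarrow> (nat \<Rightarrow> nat \<Rightarrow> nat pmf)
    \<Rightarrow> (nat \<Rightarrow> nat \<Rightarrow> nat \<Rightarrow> nat pmf) \<Rightarrow> (nat \<Rightarrow> traj) \<Rightarrow> nat
    \<Rightarrow> (nat \<Rightarrow> nat \<Rightarrow> nat \<Rightarrow> real) \<Rightarrow> bool" where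
  "valid_run S A H r pt P D K Q \<longleftrightarrow>
     (\<forall>s a. Q (Suc H) s a = 0) \<and>
     (\<forall>t\<in>{1..H}. is_minimizer S A H t (rho D K t)
         (Zmat S A r pt D K t (Q (Suc t))) (Ymat S A r pt P t (Q (Suc t))) (Q t))"

end

theory Submission
  imports Defs
begin


lemma st_Cons1[simp]: "st (x # xs, f) (Suc 0) = fst x"
  by (simp add: st_def)
lemma st_Cons2[simp]: "st (x # xs, f) (Suc (Suc i)) = st (xs, f) (Suc i)"
  by (simp add: st_def)
lemma act_Cons1[simp]: "act (x # xs, f) (Suc 0) = snd x"
  by (simp add: act_def)
lemma act_Cons2[simp]: "act (x # xs, f) (Suc (Suc i)) = act (xs, f) (Suc i)"
  by (simp add: act_def)

lemma gen_st1: "map_pmf (\<lambda>\<tau>. st \<tau> (Suc 0)) (gen_traj pb P t m s) = return_pmf s"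
proof (cases m)
  case 0 then show ?thesis by (simp add: st_def)
next
  case (Suc m')
  show ?thesis unfolding Suc
    by (simp add: map_bind_pmf pmf.map_comp o_def case_prod_unfold bind_return_pmf' map_pmf_def[symmetric]
         bind_pmf_const)
qed

lemma gen_next:
  "i < n \<Longrightarrow> map_pmf (\<lambda>\<tau>. st \<tau> (Suc (Suc i))) (gen_traj pb P t0 n s) =
     bind_pmf (map_pmf (\<lambda>\<tau>. (st \<tau> (Suc i), act \<tau> (Suc i))) (gen_traj pb P t0 n s)) (\<lambda>(x,a). P (t0+i) x a)"
proof (induction n arbitrary: t0 s i)
  case 0 then show ?case by simp
next
  case (Suc m)
  show ?case
  proof (cases i)
    case 0
    have "map_pmf (\<lambda>\<tau>. st \<tau> (Suc (Suc 0))) (gen_traj pb P t0 (Suc m) s)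
       = bind_pmf (pb t0 s) (\<lambda>a. bind_pmf (P t0 s a) (\<lambda>s'. map_pmf (\<lambda>\<tau>. st \<tau> (Suc 0)) (gen_traj pb P (Suc t0) m s')))"
      by (simp add: map_bind_pmf pmf.map_comp o_def case_prod_unfold)
    also have "\<dots> = bind_pmf (pb t0 s) (\<lambda>a. P t0 s a)"
      by (simp add: gen_st1 bind_return_pmf')
    finally show ?thesis using 0
      by (simp add: map_bind_pmf pmf.map_comp o_def case_prod_unfold bind_assoc_pmf bind_return_pmf bind_pmf_const)
  next
    case (Suc i')
    with Suc.prems have i': "i' < m" by simp
    have "map_pmf (\<lambda>\<tau>. st \<tau> (Suc (Suc i))) (gen_traj pb P t0 (Suc m) s)
       = bind_pmf (pb t0 s) (\<lambda>a. bind_pmf (P t0 s a) (\<lambda>s'. map_pmf (\<lambda>\<tau>. st \<tau> (Suc (Suc i'))) (gen_traj pb P (Suc t0) m s')))"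
      using Suc by (simp add: map_bind_pmf pmf.map_comp o_def case_prod_unfold)
    also have "\<dots> = bind_pmf (pb t0 s) (\<lambda>a. bind_pmf (P t0 s a) (\<lambda>s'. 
          bind_pmf (map_pmf (\<lambda>\<tau>. (st \<tau> (Suc i'), act \<tau> (Suc i'))) (gen_traj pb P (Suc t0) m s')) (\<lambda>(x,a). P (Suc t0+i') x a)))"
      using Suc.IH[OF i'] by simp
    finally show ?thesis using Suc
      by (simp add: map_bind_pmf pmf.map_comp o_def case_prod_unfold bind_assoc_pmf bind_map_pmf)
  qed
qed

lemma traj_next:
  assumes "1 \<le> t" "t \<le> H"
  shows "map_pmf (\<lambda>\<tau>. st \<tau> (Suc t)) (traj_pmf mu pb P H) =
     bind_pmf (map_pmf (\<lambda>\<tau>. (st \<tau> t, act \<tau> t)) (traj_pmf mu pb P H)) (\<lambda>(x,a). P t x a)"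
proof -
  obtain i where t: "t = Suc i" using assms by (cases t) auto
  have i: "i < H" using assms t by simp
  show ?thesis unfolding traj_pmf_def t
    using gen_next[OF i, of pb P 1]
    by (simp add: map_bind_pmf bind_assoc_pmf)
qed

lemma traj_mean:
  assumes "1 \<le> t" "t \<le> H"
  shows "measure_pmf.expectation (traj_pmf mu pb P H)
     (\<lambda>\<tau>. (if st \<tau> (Suc t) = s' then 1 else 0) - pmf (P t (st \<tau> t) (act \<tau> t)) s') = 0"
proof -
  let ?T = "traj_pmf mu pb P H"
  have int1: "integrable (measure_pmf ?T) (\<lambda>\<tau>. (if st \<tau> (Suc t) = s' then 1 else 0::real))"
    by (rule measure_pmf.integrable_const_bound[where B=1]) auto
  have int2: "integrable (measure_pmf ?T) (\<lambda>\<tau>. pmf (P t (st \<tau> t) (act \<tau> t)) s')"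
    by (rule measure_pmf.integrable_const_bound[where B=1]) (auto simp: pmf_le_1)
  have "measure_pmf.expectation ?T (\<lambda>\<tau>. (if st \<tau> (Suc t) = s' then 1 else 0::real))
      = measure_pmf.expectation (map_pmf (\<lambda>\<tau>. st \<tau> (Suc t)) ?T) (\<lambda>y. if y = s' then 1 else 0)"
    by simp
  also have "\<dots> = pmf (map_pmf (\<lambda>\<tau>. st \<tau> (Suc t)) ?T) s'"
  proof -
    have "(\<lambda>y. if y = s' then 1 else 0::real) = indicator {s'}" by (auto simp: indicator_def)
    then show ?thesis by (simp add: measure_pmf_single)
  qed
  also have "\<dots> = measure_pmf.expectation (map_pmf (\<lambda>\<tau>. (st \<tau> t, act \<tau> t)) ?T) (\<lambda>(x,a). pmf (P t x a) s')"
    unfolding traj_next[OF assms] pmf_bind by (simp add: case_prod_unfold)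
  also have "\<dots> = measure_pmf.expectation ?T (\<lambda>\<tau>. pmf (P t (st \<tau> t) (act \<tau> t)) s')"
    by simp
  finally show ?thesis using int1 int2 by simp
qed

definition tvalid :: "nat \<Rightarrow> nat \<Rightarrow> nat \<Rightarrow> traj \<Rightarrow> bool" where
  "tvalid S A H \<tau> \<longleftrightarrow> (\<forall>t\<in>{1..H}. st \<tau> t < S \<and> act \<tau> t < A) \<and> st \<tau> (Suc H) < S"

lemma gen_valid:
  "\<tau> \<in> set_pmf (gen_traj pb P t0 n s) \<Longrightarrow> s < S \<Longrightarrow>
   (\<forall>t. t0 \<le> t \<longrightarrow> t < t0 + n \<longrightarrow> (\<forall>s<S. set_pmf (pb t s) \<subseteq> {..<A}) \<and> (\<forall>s<S. \<forall>a<A. set_pmf (P t s a) \<subseteq> {..<S})) \<Longrightarrow>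
   (\<forall>j\<in>{1..n}. st \<tau> j < S \<and> act \<tau> j < A) \<and> st \<tau> (Suc n) < S"
proof (induction n arbitrary: t0 s \<tau>)
  case 0
  then show ?case by (simp add: st_def)
next
  case (Suc m)
  from Suc.prems(1) obtain a s' \<tau>' where a: "a \<in> set_pmf (pb t0 s)" and s': "s' \<in> set_pmf (P t0 s a)"
    and \<tau>': "\<tau>' \<in> set_pmf (gen_traj pb P (Suc t0) m s')" and \<tau>: "\<tau> = ((s,a) # fst \<tau>', snd \<tau>')"
    by (auto simp: case_prod_unfold)
  have hyp0: "(\<forall>s<S. set_pmf (pb t0 s) \<subseteq> {..<A}) \<and> (\<forall>s<S. \<forall>a<A. set_pmf (P t0 s a) \<subseteq> {..<S})"
    using Suc.prems(3) by auto
  have aA: "a < A" using hyp0 a Suc.prems(2) by auto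
  have sS: "s' < S" using hyp0 s' aA Suc.prems(2) by blast
  have IH: "(\<forall>j\<in>{1..m}. st \<tau>' j < S \<and> act \<tau>' j < A) \<and> st \<tau>' (Suc m) < S"
    using Suc.IH[OF \<tau>' sS] Suc.prems(3) by auto
  have "st \<tau> j < S \<and> act \<tau> j < A" if j: "j \<in> {1..Suc m}" for j
  proof (cases j)
    case 0 with j show ?thesis by simp
  next
    case (Suc i)
    show ?thesis
    proof (cases i)
      case 0 with Suc show ?thesis using \<tau> aA Suc.prems(2) by simp
    next
      case (Suc i')
      with \<open>j = Suc i\<close> j have "st \<tau> j = st \<tau>' (Suc i')" "act \<tau> j = act \<tau>' (Suc i')" "Suc i' \<in> {1..m}"
        using \<tau> by (metis prod.collapse st_Cons2 act_Cons2, metis prod.collapse st_Cons2 act_Cons2, auto)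
      then show ?thesis using IH by simp
    qed
  qed
  moreover have "st \<tau> (Suc (Suc m)) = st \<tau>' (Suc m)" using \<tau> by (metis prod.collapse st_Cons2)
  ultimately show ?case using IH by simp
qed

lemma traj_valid:
  assumes "\<tau> \<in> set_pmf (traj_pmf mu pb P H)" "set_pmf mu \<subseteq> {..<S}"
    "\<forall>t\<in>{1..H}. \<forall>s<S. set_pmf (pb t s) \<subseteq> {..<A}"
    "\<forall>t\<in>{1..H}. \<forall>s<S. \<forall>a<A. set_pmf (P t s a) \<subseteq> {..<S}"
  shows "tvalid S A H \<tau>"
proof -
  from assms(1) obtain s where s: "s \<in> set_pmf mu" and \<tau>: "\<tau> \<in> set_pmf (gen_traj pb P 1 H s)"
    by (auto simp: traj_pmf_def)
  show ?thesis unfolding tvalid_def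
    by (rule gen_valid[OF \<tau>]) (use s assms in auto)
qed

lemma sample_valid:
  assumes "D \<in> set_pmf (sample_pmf K mu pb P H)" "k < K"
  shows "D k \<in> set_pmf (traj_pmf mu pb P H)"
  using assms unfolding sample_pmf_def by (auto simp: set_Pi_pmf PiE_dflt_def)



lemma hoeffding_pi:
  fixes p :: "'a pmf" and f :: "'a \<Rightarrow> real"
  assumes K: "K > 0" and fab: "\<And>x. f x \<in> {a..b}" and ab: "a < b" and eps: "\<epsilon> \<ge> 0"
  shows "measure_pmf.prob (Pi_pmf {..<K} d (\<lambda>_. p))
           {D. (\<Sum>k<K. f (D k)) \<ge> real K * measure_pmf.expectation p f + \<epsilon>}
         \<le> exp (-2 * \<epsilon>\<^sup>2 / (real K * (b - a)\<^sup>2))"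
proof -
  define M where "M = Pi_pmf {..<K} d (\<lambda>_. p)"
  have comp: "map_pmf (\<lambda>D. D k) M = p" if "k < K" for k
    unfolding M_def using that by (subst Pi_pmf_component) auto
  interpret H: Hoeffding_ineq_iid "measure_pmf M" "{..<K}" "\<lambda>k D. f (D k)" "\<lambda>D. f (D 0)" a b
     "measure_pmf.expectation M (\<lambda>D. f (D 0))"
  proof unfold_locales
    show "prob_space.indep_vars (measure_pmf M) (\<lambda>_. borel) (\<lambda>k D. f (D k)) {..<K}"
      unfolding M_def
      by (intro prob_space.indep_vars_compose2[OF _ indep_vars_Pi_pmf])
         (auto simp: measure_pmf.prob_space_axioms)
  next
    fix i assume i: "i \<in> {..<K}"
    have "distr (measure_pmf M) borel (\<lambda>D. f (D i)) = distr (measure_pmf (map_pmf (\<lambda>D. D i) M)) borel f"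
      unfolding map_pmf_rep_eq by (subst distr_distr) (auto simp: o_def)
    also have "\<dots> = distr (measure_pmf (map_pmf (\<lambda>D. D 0) M)) borel f"
      using i K by (simp add: comp)
    also have "\<dots> = distr (measure_pmf M) borel (\<lambda>D. f (D 0))"
      unfolding map_pmf_rep_eq by (subst distr_distr) (auto simp: o_def)
    finally show "distr (measure_pmf M) borel (\<lambda>D. f (D i)) = distr (measure_pmf M) borel (\<lambda>D. f (D 0))" .
  qed (use fab in auto)
  have E: "measure_pmf.expectation M (\<lambda>D. f (D 0)) = measure_pmf.expectation p f"
  proof -
    have "measure_pmf.expectation M (\<lambda>D. f (D 0)) = measure_pmf.expectation (map_pmf (\<lambda>D. D 0) M) f"
      by simp
    also have "\<dots> = measure_pmf.expectation p f" using K by (simp add: comp)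
    finally show ?thesis .
  qed
  have "{..<K} \<noteq> {}" using K by auto
  from H.Hoeffding_ineq_ge[OF eps ab this] show ?thesis
    unfolding E by (simp add: M_def[symmetric])
qed



lemma point:
  "rho D K t s a * (Zmat S A r pt D K t Qn s a - Ymat S A r pt P t Qn s a) =
   (1 / real K) * (\<Sum>k<K. if st (D k) t = s \<and> act (D k) t = a then
      (\<Sum>s'<S. ((if st (D k) (Suc t) = s' then 1 else 0) - pmf (P t s a) s') * Vfun A pt (Suc t) Qn s') else 0)"
proof -
  define I where "I = {k\<in>{..<K}. st (D k) t = s \<and> act (D k) t = a}"
  define V where "V = Vfun A pt (Suc t) Qn"
  define N where "N = (\<lambda>s'. card {k\<in>I. st (D k) (Suc t) = s'})"
  have fin: "finite I" unfolding I_def by auto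
  have c: "cnt D K t s a = card I" unfolding cnt_def I_def ..
  have c3: "cnt3 D K t s a s' = N s'" for s'
    unfolding cnt3_def N_def I_def by (rule arg_cong[where f=card]) auto
  have "(\<Sum>k<K. if st (D k) t = s \<and> act (D k) t = a then
      (\<Sum>s'<S. ((if st (D k) (Suc t) = s' then 1 else 0) - pmf (P t s a) s') * V s') else 0)
      = (\<Sum>k\<in>I. (\<Sum>s'<S. ((if st (D k) (Suc t) = s' then 1 else 0) - pmf (P t s a) s') * V s'))"
    unfolding I_def by (subst sum.inter_filter) auto
  also have "\<dots> = (\<Sum>s'<S. (\<Sum>k\<in>I. ((if st (D k) (Suc t) = s' then 1 else 0) - pmf (P t s a) s') * V s'))"
    by (rule sum.swap)
  also have "\<dots> = (\<Sum>s'<S. (real (N s') - real (card I) * pmf (P t s a) s') * V s')"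
  proof (rule sum.cong[OF refl])
    fix s'
    have "(\<Sum>k\<in>I. (if st (D k) (Suc t) = s' then 1 else 0::real)) = real (N s')"
      unfolding N_def using fin by (simp add: sum.inter_filter[symmetric])
    then show "(\<Sum>k\<in>I. ((if st (D k) (Suc t) = s' then 1 else 0) - pmf (P t s a) s') * V s') =
          (real (N s') - real (card I) * pmf (P t s a) s') * V s'"
      by (simp add: sum_distrib_right[symmetric] sum_subtractf)
  qed
  finally have R: "(\<Sum>k<K. if st (D k) t = s \<and> act (D k) t = a then
      (\<Sum>s'<S. ((if st (D k) (Suc t) = s' then 1 else 0) - pmf (P t s a) s') * V s') else 0)
      = (\<Sum>s'<S. (real (N s') - real (card I) * pmf (P t s a) s') * V s')" .
  show ?thesis
  proof (cases "card I = 0")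
    case True
    then have "I = {}" using fin by simp
    then have "N s' = 0" for s' unfolding N_def by simp
    then show ?thesis using True unfolding V_def[symmetric] R by (simp add: rho_def c)
  next
    case False
    have "rho D K t s a * (Zmat S A r pt D K t Qn s a - Ymat S A r pt P t Qn s a)
       = real (card I) / real K * ((\<Sum>s'<S. real (N s') / real (card I) * V s') - (\<Sum>s'<S. pmf (P t s a) s' * V s'))"
      using False by (simp add: rho_def c Zmat_def Ymat_def Phat_def c3 V_def)
    also have "\<dots> = (1 / real K) * (\<Sum>s'<S. (real (N s') - real (card I) * pmf (P t s a) s') * V s')"
      using False by (simp add: sum_distrib_left sum_subtractf[symmetric] field_simps, intro sum.cong refl, cases "K = 0", simp_all add: field_simps)
    finally show ?thesis unfolding V_def[symmetric] R .
  qed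
qed

lemma inner_eq:
  assumes valid: "\<forall>k<K. st (D k) t < S \<and> act (D k) t < A"
  shows "inner_SA S A (rho D K t) (\<lambda>s a. Zmat S A r pt D K t Qn s a - Ymat S A r pt P t Qn s a) =
    (1 / real K) * (\<Sum>k<K. \<Sum>s'<S. ((if st (D k) (Suc t) = s' then 1 else 0) - pmf (P t (st (D k) t) (act (D k) t)) s') * Vfun A pt (Suc t) Qn s')"
proof -
  define G where "G = (\<lambda>k s a. (\<Sum>s'<S. ((if st (D k) (Suc t) = s' then 1 else 0) - pmf (P t s a) s') * Vfun A pt (Suc t) Qn s'))"
  have "inner_SA S A (rho D K t) (\<lambda>s a. Zmat S A r pt D K t Qn s a - Ymat S A r pt P t Qn s a)
     = (\<Sum>s<S. \<Sum>a<A. (1 / real K) * (\<Sum>k<K. if st (D k) t = s \<and> act (D k) t = a then G k s a else 0))"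
    unfolding inner_SA_def point G_def ..
  also have "\<dots> = (1 / real K) * (\<Sum>k<K. \<Sum>s<S. \<Sum>a<A. if st (D k) t = s \<and> act (D k) t = a then G k s a else 0)"
  proof -
    have "(\<Sum>s<S. \<Sum>a<A. \<Sum>k<K. if st (D k) t = s \<and> act (D k) t = a then G k s a else 0)
       = (\<Sum>s<S. \<Sum>k<K. \<Sum>a<A. if st (D k) t = s \<and> act (D k) t = a then G k s a else 0)"
      by (rule sum.cong[OF refl]) (rule sum.swap)
    also have "\<dots> = (\<Sum>k<K. \<Sum>s<S. \<Sum>a<A. if st (D k) t = s \<and> act (D k) t = a then G k s a else 0)"
      by (rule sum.swap)
    finally have sw: "(\<Sum>s<S. \<Sum>a<A. \<Sum>k<K. if st (D k) t = s \<and> act (D k) t = a then G k s a else 0)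
       = (\<Sum>k<K. \<Sum>s<S. \<Sum>a<A. if st (D k) t = s \<and> act (D k) t = a then G k s a else 0)" .
    have "(\<Sum>s<S. \<Sum>a<A. (1 / real K) * (\<Sum>k<K. if st (D k) t = s \<and> act (D k) t = a then G k s a else 0))
      = (1 / real K) * (\<Sum>s<S. \<Sum>a<A. \<Sum>k<K. if st (D k) t = s \<and> act (D k) t = a then G k s a else 0)"
      by (simp only: sum_distrib_left)
    then show ?thesis unfolding sw .
  qed
  also have "(\<Sum>k<K. \<Sum>s<S. \<Sum>a<A. if st (D k) t = s \<and> act (D k) t = a then G k s a else 0)
      = (\<Sum>k<K. G k (st (D k) t) (act (D k) t))"
  proof (rule sum.cong[OF refl])
    fix k assume k: "k \<in> {..<K}"
    have "(\<Sum>s<S. \<Sum>a<A. if st (D k) t = s \<and> act (D k) t = a then G k s a else 0)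
        = (\<Sum>s<S. if st (D k) t = s then (\<Sum>a<A. if act (D k) t = a then G k s a else 0) else 0)"
      by (intro sum.cong refl) auto
    also have "\<dots> = (\<Sum>s<S. if st (D k) t = s then G k s (act (D k) t) else 0)"
      using valid k by (intro sum.cong refl) (auto simp: sum.delta)
    also have "\<dots> = G k (st (D k) t) (act (D k) t)"
      using valid k by (simp add: sum.delta)
    finally show "(\<Sum>s<S. \<Sum>a<A. if st (D k) t = s \<and> act (D k) t = a then G k s a else 0) = G k (st (D k) t) (act (D k) t)" .
  qed
  finally show ?thesis unfolding G_def .
qed



definition Xv :: "(nat \<Rightarrow> nat \<Rightarrow> nat \<Rightarrow> nat pmf) \<Rightarrow> (nat \<Rightarrow> traj) \<Rightarrow> nat \<Rightarrow> nat \<Rightarrow> nat \<Rightarrow> real" where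
  "Xv P D K t s' = (\<Sum>k<K. (if st (D k) (Suc t) = s' then 1 else 0) - pmf (P t (st (D k) t) (act (D k) t)) s')"

definition fB :: "(nat \<Rightarrow> nat \<Rightarrow> nat \<Rightarrow> nat pmf) \<Rightarrow> nat \<Rightarrow> nat \<Rightarrow> nat set \<Rightarrow> traj \<Rightarrow> real" where
  "fB P S t B \<tau> = (\<Sum>s'<S. (if s' \<in> B then 1 else -1) *
      ((if st \<tau> (Suc t) = s' then 1 else 0) - pmf (P t (st \<tau> t) (act \<tau> t)) s'))"

lemma abs_bound:
  fixes w :: "nat \<Rightarrow> nat \<Rightarrow> real"
  assumes "\<forall>s'<S. \<bar>V s'\<bar> \<le> c"
  shows "\<bar>\<Sum>k<K. \<Sum>s'<S. w k s' * V s'\<bar> \<le> c * (\<Sum>s'<S. \<bar>\<Sum>k<K. w k s'\<bar>)"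
proof -
  have "(\<Sum>k<K. \<Sum>s'<S. w k s' * V s') = (\<Sum>s'<S. V s' * (\<Sum>k<K. w k s'))"
    by (subst sum.swap) (simp add: sum_distrib_left mult.commute)
  also have "\<bar>\<dots>\<bar> \<le> (\<Sum>s'<S. \<bar>V s' * (\<Sum>k<K. w k s')\<bar>)" by (rule sum_abs)
  also have "\<dots> \<le> (\<Sum>s'<S. c * \<bar>\<Sum>k<K. w k s'\<bar>)"
    using assms by (intro sum_mono) (auto simp: abs_mult intro: mult_right_mono)
  finally show ?thesis by (simp add: sum_distrib_left)
qed

lemma abs_sum_fB:
  "(\<Sum>s'<S. \<bar>Xv P D K t s'\<bar>) = (\<Sum>k<K. fB P S t {s'. s' < S \<and> Xv P D K t s' \<ge> 0} (D k))"
proof -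
  have "(\<Sum>k<K. fB P S t {s'. s' < S \<and> Xv P D K t s' \<ge> 0} (D k)) =
     (\<Sum>s'<S. (if Xv P D K t s' \<ge> 0 then 1 else -1) * Xv P D K t s')"
    unfolding fB_def Xv_def by (subst sum.swap) (rule sum.cong[OF refl], simp add: sum_distrib_left)
  also have "\<dots> = (\<Sum>s'<S. \<bar>Xv P D K t s'\<bar>)" by (intro sum.cong) auto
  finally show ?thesis ..
qed

lemma sum_pmf_le1: "sum (pmf p) {..<(n::nat)} \<le> 1"
proof -
  have "sum (pmf p) {..<n} = measure_pmf.prob p {..<n}" by (rule measure_measure_pmf_finite[symmetric]) simp
  also have "\<dots> \<le> 1" by (rule measure_pmf.prob_le_1)
  finally show ?thesis .
qed

lemma fB_bound: "\<bar>fB P S t B \<tau>\<bar> \<le> 2"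
proof -
  have "\<bar>fB P S t B \<tau>\<bar> \<le> (\<Sum>s'<S. \<bar>(if s' \<in> B then 1 else -1) *
      ((if st \<tau> (Suc t) = s' then 1 else 0) - pmf (P t (st \<tau> t) (act \<tau> t)) s')\<bar>)"
    unfolding fB_def by (rule sum_abs)
  also have "\<dots> \<le> (\<Sum>s'<S. (if st \<tau> (Suc t) = s' then 1 else 0) + pmf (P t (st \<tau> t) (act \<tau> t)) s')"
    by (intro sum_mono) (auto simp: abs_mult abs_le_iff pmf_nonneg)
  also have "\<dots> = (\<Sum>s'<S. (if st \<tau> (Suc t) = s' then 1 else 0)) + sum (pmf (P t (st \<tau> t) (act \<tau> t))) {..<S}"
    by (simp add: sum.distrib)
  also have "(\<Sum>s'<S. (if st \<tau> (Suc t) = s' then 1 else 0)) \<le> (1::real)"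
    by (simp add: sum.delta)
  also have "sum (pmf (P t (st \<tau> t) (act \<tau> t))) {..<S} \<le> 1"
    by (rule sum_pmf_le1)
  finally show ?thesis by simp
qed

lemma V_bound:
  assumes run: "valid_run S A H r pt P D K Q" and t: "t \<in> {1..H}" and s': "s' < S"
  shows "\<bar>Vfun A pt (Suc t) (Q (Suc t)) s'\<bar> \<le> real H"
proof -
  have Qb: "\<bar>Q (Suc t) s' a'\<bar> \<le> real H" if "a' < A" for a'
  proof (cases "t = H")
    case True then show ?thesis using run by (simp add: valid_run_def)
  next
    case False
    then have "Suc t \<in> {1..H}" using t by auto
    then have "feasible S A H (Suc t) (rho D K (Suc t)) (Zmat S A r pt D K (Suc t) (Q (Suc (Suc t))))
       (Ymat S A r pt P (Suc t) (Q (Suc (Suc t)))) (Q (Suc t))"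
      using run by (auto simp: valid_run_def is_minimizer_def)
    then have "\<bar>Q (Suc t) s' a'\<bar> \<le> real H - real (Suc t) + 1"
      using s' that by (auto simp: feasible_def)
    then show ?thesis by simp
  qed
  have "\<bar>Vfun A pt (Suc t) (Q (Suc t)) s'\<bar> \<le> (\<Sum>a'<A. \<bar>pmf (pt (Suc t) s') a' * Q (Suc t) s' a'\<bar>)"
    unfolding Vfun_def by (rule sum_abs)
  also have "\<dots> \<le> (\<Sum>a'<A. pmf (pt (Suc t) s') a' * real H)"
    using Qb by (intro sum_mono) (auto simp: abs_mult intro: mult_left_mono)
  also have "\<dots> = sum (pmf (pt (Suc t) s')) {..<A} * real H" by (simp add: sum_distrib_right)
  also have "\<dots> \<le> 1 * real H" by (intro mult_right_mono sum_pmf_le1) auto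
  finally show ?thesis by simp
qed



lemma prob_from_bad:
  assumes "\<forall>D\<in>set_pmf M. D \<notin> Bad \<longrightarrow> D \<in> G" "measure_pmf.prob M Bad \<le> d"
  shows "measure_pmf.prob M G \<ge> 1 - d"
proof -
  have "measure_pmf.prob M (UNIV - G) = measure_pmf.prob M ((UNIV - G) \<inter> set_pmf M)"
    by (simp add: measure_Int_set_pmf)
  also have "\<dots> \<le> measure_pmf.prob M Bad"
    using assms(1) by (intro measure_pmf.finite_measure_mono) auto
  finally have 1: "measure_pmf.prob M (UNIV - G) \<le> d" using assms(2) by simp
  have "measure_pmf.prob M (UNIV - (UNIV - G)) = 1 - measure_pmf.prob M (UNIV - G)"
    using measure_pmf.prob_compl[of "UNIV - G" M] by simp
  then show ?thesis using 1 by (simp add: Diff_Diff_Int)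
qed

lemma fB_mean:
  assumes "1 \<le> t" "t \<le> H"
  shows "measure_pmf.expectation (traj_pmf mu pb P H) (fB P S t B) = 0"
proof -
  let ?T = "traj_pmf mu pb P H"
  have int: "integrable (measure_pmf ?T) (\<lambda>\<tau>. (if st \<tau> (Suc t) = s' then 1 else 0) - pmf (P t (st \<tau> t) (act \<tau> t)) s')" for s'
  proof (rule measure_pmf.integrable_const_bound[where B=2])
    have b: "\<bar>(if st \<tau> (Suc t) = s' then 1 else 0) - pmf (P t (st \<tau> t) (act \<tau> t)) s'\<bar> \<le> (2::real)" for \<tau>
    proof -
      define q where "q = pmf (P t (st \<tau> t) (act \<tau> t)) s'"
      have "0 \<le> q" "q \<le> 1" unfolding q_def by (simp_all add: pmf_le_1)
      then show ?thesis unfolding q_def[symmetric] by (auto simp: abs_le_iff)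
    qed
    then show "AE x in measure_pmf ?T. norm ((if st x (Suc t) = s' then 1 else 0) - pmf (P t (st x t) (act x t)) s') \<le> 2"
      by (intro AE_I2) simp
  qed simp
  have "measure_pmf.expectation ?T (fB P S t B) = (\<Sum>s'<S. (if s' \<in> B then 1 else -1) *
      measure_pmf.expectation ?T (\<lambda>\<tau>. (if st \<tau> (Suc t) = s' then 1 else 0) - pmf (P t (st \<tau> t) (act \<tau> t)) s'))"
    unfolding fB_def using int by (subst Bochner_Integration.integral_sum) auto
  also have "\<dots> = 0" using traj_mean[OF assms] by simp
  finally show ?thesis .
qed

lemma Xv_S1:
  assumes val: "\<forall>k<K. tvalid 1 A H (D k)" and t: "t \<in> {1..H}"
    and PP: "\<forall>t\<in>{1..H}. \<forall>s<1. \<forall>a<A. set_pmf (P t s a) \<subseteq> {..<1}"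
  shows "Xv P D K t 0 = 0"
  unfolding Xv_def
proof (rule sum.neutral, intro ballI)
  fix k assume k: "k \<in> {..<K}"
  have v: "st (D k) t < 1" "act (D k) t < A" using val k t by (auto simp: tvalid_def)
  have "st (D k) (Suc t) < 1"
  proof (cases "t = H")
    case True then show ?thesis using val k by (auto simp: tvalid_def)
  next
    case False then have "Suc t \<in> {1..H}" using t by auto
    then show ?thesis using val k by (auto simp: tvalid_def)
  qed
  moreover have "P t (st (D k) t) (act (D k) t) = return_pmf 0"
  proof -
    have "set_pmf (P t (st (D k) t) (act (D k) t)) \<subseteq> {..<1}" using PP t v by blast
    then have "set_pmf (P t (st (D k) t) (act (D k) t)) \<subseteq> {0}" by auto
    then show ?thesis by (simp add: set_pmf_subset_singleton)
  qed
  ultimately show "(if st (D k) (Suc t) = 0 then 1 else 0) - pmf (P t (st (D k) t) (act (D k) t)) 0 = 0"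
    by simp
qed

lemma arith_final:
  fixes H S :: nat and \<delta> L :: real
  assumes H: "H \<ge> 1" and S: "S \<ge> 2" and d: "0 < \<delta>" "\<delta> < 1" and L: "L = ln (real H * real S / \<delta>)"
  shows "real H * 2 ^ S * exp (- 2 * real S * L) \<le> \<delta>"
proof -
  have HS: "real H * real S / \<delta> \<ge> 2"
  proof -
    have "real H * real S \<ge> 2" using H S
      by (metis mult_1 mult_mono of_nat_0_le_iff of_nat_1 of_nat_le_iff of_nat_numeral one_le_numeral)
    also have "\<dots> \<le> real H * real S / \<delta>"
    proof -
      have "real H * real S * \<delta> \<le> real H * real S * 1" using d by (intro mult_left_mono) auto
      then show ?thesis using d by (simp add: le_divide_eq)
    qed
    finally show ?thesis .
  qed
  have L2: "L \<ge> ln 2" using HS L by simp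
  have L1: "L \<ge> 0" using L2 ln_ge_zero[of 2] by linarith
  have e1: "exp (- (real S * L)) \<le> exp (- (real S * ln 2))"
    using L2 by (simp add: mult_left_mono)
  also have "\<dots> = inverse (2 ^ S)"
    by (simp add: exp_minus exp_of_nat_mult)
  finally have e1: "exp (- (real S * L)) \<le> inverse (2 ^ S)" .
  have "exp (- (real S * L)) \<le> exp (- L)"
    using L1 S by (simp add: mult_le_cancel_right1)
  also have "\<dots> = \<delta> / (real H * real S)"
    using L HS d H S by (simp add: exp_minus) 
  also have "\<dots> \<le> \<delta> / real H"
    using d H S by (intro divide_left_mono) auto
  finally have e2: "exp (- (real S * L)) \<le> \<delta> / real H" .
  have "exp (- 2 * real S * L) = exp (- (real S * L)) * exp (- (real S * L))"
    by (simp flip: exp_add)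
  also have "\<dots> \<le> inverse (2 ^ S) * (\<delta> / real H)"
    by (intro mult_mono e1 e2) auto
  finally have "real H * 2 ^ S * exp (- 2 * real S * L) \<le> real H * 2 ^ S * (inverse (2 ^ S) * (\<delta> / real H))"
    by (intro mult_left_mono) auto
  also have "\<dots> = \<delta>" using H by (simp add: field_simps)
  finally show ?thesis .
qed



theorem lemma4:
  shows "\<exists>C>0. \<forall>(S::nat) (A::nat) (H::nat) (K::nat) (\<delta>::real)
      (mu :: nat pmf) (pb :: nat \<Rightarrow> nat \<Rightarrow> nat pmf) (pt :: nat \<Rightarrow> nat \<Rightarrow> nat pmf)
      (P :: nat \<Rightarrow> nat \<Rightarrow> nat \<Rightarrow> nat pmf) (r :: nat \<Rightarrow> nat \<Rightarrow> nat \<Rightarrow> real).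
    S \<ge> 1 \<longrightarrow> A \<ge> 1 \<longrightarrow>
    set_pmf mu \<subseteq> {..<S} \<longrightarrow>
    (\<forall>t\<in>{1..H}. \<forall>s<S. set_pmf (pb t s) \<subseteq> {..<A}) \<longrightarrow>
    (\<forall>t\<in>{1..Suc H}. \<forall>s<S. set_pmf (pt t s) \<subseteq> {..<A}) \<longrightarrow>
    (\<forall>t\<in>{1..H}. \<forall>s<S. \<forall>a<A. set_pmf (P t s a) \<subseteq> {..<S}) \<longrightarrow>
    (\<forall>t\<in>{1..H}. \<forall>s<S. \<forall>a<A. 0 \<le> r t s a \<and> r t s a \<le> 1) \<longrightarrow>
    0 < \<delta> \<longrightarrow> \<delta> < 1 \<longrightarrow>
    measure_pmf.prob (sample_pmf K mu pb P H)
      {D. \<forall>Q. valid_run S A H r pt P D K Q \<longrightarrow>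
            (\<forall>t\<in>{1..H}.
               \<bar>inner_SA S A (rho D K t)
                  (\<lambda>s a. Zmat S A r pt D K t (Q (Suc t)) s a - Ymat S A r pt P t (Q (Suc t)) s a)\<bar>
               \<le> C * real H * sqrt (real S * ln (real H * real S / \<delta>) / real K))}
      \<ge> 1 - \<delta>"
proof (intro exI[of _ "4::real"] conjI allI impI)
  fix S A H K :: nat and \<delta> :: real and mu :: "nat pmf" and pb pt :: "nat \<Rightarrow> nat \<Rightarrow> nat pmf"
    and P :: "nat \<Rightarrow> nat \<Rightarrow> nat \<Rightarrow> nat pmf" and r :: "nat \<Rightarrow> nat \<Rightarrow> nat \<Rightarrow> real"
  assume S1: "S \<ge> 1" and A1: "A \<ge> 1" and mu: "set_pmf mu \<subseteq> {..<S}"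
    and pbA: "\<forall>t\<in>{1..H}. \<forall>s<S. set_pmf (pb t s) \<subseteq> {..<A}"
    and ptA: "\<forall>t\<in>{1..Suc H}. \<forall>s<S. set_pmf (pt t s) \<subseteq> {..<A}"
    and PS: "\<forall>t\<in>{1..H}. \<forall>s<S. \<forall>a<A. set_pmf (P t s a) \<subseteq> {..<S}"
    and rb: "\<forall>t\<in>{1..H}. \<forall>s<S. \<forall>a<A. 0 \<le> r t s a \<and> r t s a \<le> 1"
    and d0: "0 < \<delta>" and d1: "\<delta> < 1"
  define M where "M = sample_pmf K mu pb P H"
  define L where "L = ln (real H * real S / \<delta>)"
  define R where "R = 4 * real H * sqrt (real S * L / real K)"
  define G where "G = {D. \<forall>Q. valid_run S A H r pt P D K Q \<longrightarrow>
            (\<forall>t\<in>{1..H}.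
               \<bar>inner_SA S A (rho D K t)
                  (\<lambda>s a. Zmat S A r pt D K t (Q (Suc t)) s a - Ymat S A r pt P t (Q (Suc t)) s a)\<bar> \<le> R)}"
  have main: "measure_pmf.prob M G \<ge> 1 - \<delta>"
  proof (cases "H = 0 \<or> K = 0")
    case True
    have "G = UNIV"
    proof (cases "H = 0")
      case True then show ?thesis unfolding G_def by auto
    next
      case False
      with True have K0: "K = 0" by simp
      then show ?thesis unfolding G_def R_def by (auto simp: inner_SA_def rho_def)
    qed
    then show ?thesis using d0 by simp
  next
    case False
    then have H1: "H \<ge> 1" and K1: "K \<ge> 1" by auto
    have HS1: "real H * real S / \<delta> > 1"
    proof -
      have "real H * real S \<ge> 1" using H1 S1
        by (metis mult_1 mult_mono of_nat_0_le_iff of_nat_1 of_nat_le_iff)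
      then show ?thesis using d0 d1 by (simp add: field_simps)
    qed
    then have Lpos: "L > 0" unfolding L_def by simp
    have Rnn: "R \<ge> 0" unfolding R_def using Lpos by simp
    define \<epsilon> where "\<epsilon> = real K * (R / real H)"
    have eps_nn: "\<epsilon> \<ge> 0" unfolding \<epsilon>_def using Rnn by simp
    define Bad where "Bad = {D. \<exists>t\<in>{1..H}. \<exists>B\<in>Pow {..<S}. (\<Sum>k<K. fB P S t B (D k)) \<ge> \<epsilon>}"
    have det: "\<bar>inner_SA S A (rho D K t)
                  (\<lambda>s a. Zmat S A r pt D K t (Q (Suc t)) s a - Ymat S A r pt P t (Q (Suc t)) s a)\<bar>
              \<le> real H / real K * (\<Sum>s'<S. \<bar>Xv P D K t s'\<bar>)"
      if D: "D \<in> set_pmf M" and Q: "valid_run S A H r pt P D K Q" and t: "t \<in> {1..H}" for D Q t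
    proof -
      have val: "tvalid S A H (D k)" if "k < K" for k
        using traj_valid[OF sample_valid[OF D[unfolded M_def] that] mu pbA PS] .
      have v1: "\<forall>k<K. st (D k) t < S \<and> act (D k) t < A" using val t by (auto simp: tvalid_def)
      have "\<bar>inner_SA S A (rho D K t)
                  (\<lambda>s a. Zmat S A r pt D K t (Q (Suc t)) s a - Ymat S A r pt P t (Q (Suc t)) s a)\<bar>
         = (1 / real K) * \<bar>\<Sum>k<K. \<Sum>s'<S. ((if st (D k) (Suc t) = s' then 1 else 0) - pmf (P t (st (D k) t) (act (D k) t)) s') * Vfun A pt (Suc t) (Q (Suc t)) s'\<bar>"
        unfolding inner_eq[OF v1] by (simp add: abs_mult)
      also have "\<dots> \<le> (1 / real K) * (real H * (\<Sum>s'<S. \<bar>Xv P D K t s'\<bar>))"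
        unfolding Xv_def
        by (intro mult_left_mono abs_bound) (use V_bound[OF Q t] in auto)
      finally show ?thesis by simp
    qed
    have valid_all: "\<forall>k<K. tvalid S A H (D k)" if D: "D \<in> set_pmf M" for D
      using traj_valid[OF sample_valid[OF D[unfolded M_def]] mu pbA PS] by blast
    show ?thesis
    proof (cases "S = 1")
      case True
      have "\<forall>D\<in>set_pmf M. D \<notin> {} \<longrightarrow> D \<in> G"
      proof (intro ballI impI)
        fix D assume D: "D \<in> set_pmf M"
        show "D \<in> G" unfolding G_def
        proof (intro CollectI allI impI ballI)
          fix Q t assume Q: "valid_run S A H r pt P D K Q" and t: "t \<in> {1..H}"
          have "Xv P D K t 0 = 0"
            by (rule Xv_S1) (use valid_all[OF D] True t PS in auto)
          then have "(\<Sum>s'<S. \<bar>Xv P D K t s'\<bar>) = 0" using True by simp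
          then show "\<bar>inner_SA S A (rho D K t)
                  (\<lambda>s a. Zmat S A r pt D K t (Q (Suc t)) s a - Ymat S A r pt P t (Q (Suc t)) s a)\<bar> \<le> R"
            using det[OF D Q t] Rnn by simp
        qed
      qed
      from prob_from_bad[OF this, of \<delta>] show ?thesis using d0 by simp
    next
      case False
      with S1 have S2: "S \<ge> 2" by simp
      have good: "\<forall>D\<in>set_pmf M. D \<notin> Bad \<longrightarrow> D \<in> G"
      proof (intro ballI impI)
        fix D assume D: "D \<in> set_pmf M" and nb: "D \<notin> Bad"
        show "D \<in> G" unfolding G_def
        proof (intro CollectI allI impI ballI)
          fix Q t assume Q: "valid_run S A H r pt P D K Q" and t: "t \<in> {1..H}"
          have Bp: "{s'. s' < S \<and> Xv P D K t s' \<ge> 0} \<in> Pow {..<S}" by auto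
          from nb have nb': "\<forall>t\<in>{1..H}. \<forall>B\<in>Pow {..<S}. \<not> (\<Sum>k<K. fB P S t B (D k)) \<ge> \<epsilon>"
            unfolding Bad_def by simp
          have "\<not> (\<Sum>k<K. fB P S t {s'. s' < S \<and> Xv P D K t s' \<ge> 0} (D k)) \<ge> \<epsilon>"
            using bspec[OF bspec[OF nb' t] Bp] .
          then have "(\<Sum>k<K. fB P S t {s'. s' < S \<and> Xv P D K t s' \<ge> 0} (D k)) < \<epsilon>"
            by simp
          then have "(\<Sum>s'<S. \<bar>Xv P D K t s'\<bar>) \<le> \<epsilon>" unfolding abs_sum_fB by simp
          then have "real H / real K * (\<Sum>s'<S. \<bar>Xv P D K t s'\<bar>) \<le> real H / real K * \<epsilon>"
            by (intro mult_left_mono) auto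
          also have "\<dots> = R" unfolding \<epsilon>_def using H1 K1 by simp
          finally show "\<bar>inner_SA S A (rho D K t)
                  (\<lambda>s a. Zmat S A r pt D K t (Q (Suc t)) s a - Ymat S A r pt P t (Q (Suc t)) s a)\<bar> \<le> R"
            using det[OF D Q t] by linarith
        qed
      qed
      have eps2: "\<epsilon>\<^sup>2 = 16 * real K * real S * L"
      proof -
        have "\<epsilon> = real K * (4 * sqrt (real S * L / real K))" unfolding \<epsilon>_def R_def using H1 by simp
        then have "\<epsilon>\<^sup>2 = (real K)\<^sup>2 * 16 * (sqrt (real S * L / real K))\<^sup>2"
          by (simp add: power_mult_distrib)
        also have "(sqrt (real S * L / real K))\<^sup>2 = real S * L / real K"
          using Lpos by (intro real_sqrt_pow2) simp
        finally show ?thesis using K1 by (simp add: power2_eq_square field_simps)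
      qed
      have each: "measure_pmf.prob M {D. (\<Sum>k<K. fB P S t B (D k)) \<ge> \<epsilon>} \<le> exp (- 2 * real S * L)"
        if t: "t \<in> {1..H}" for t B
      proof -
        have "measure_pmf.prob (Pi_pmf {..<K} ([], 0) (\<lambda>_. traj_pmf mu pb P H))
           {D. (\<Sum>k<K. fB P S t B (D k)) \<ge> real K * measure_pmf.expectation (traj_pmf mu pb P H) (fB P S t B) + \<epsilon>}
           \<le> exp (-2 * \<epsilon>\<^sup>2 / (real K * (2 - (-2))\<^sup>2))"
        proof (rule hoeffding_pi)
          fix x show "fB P S t B x \<in> {-2..2}" using fB_bound[of P S t B x] by (simp add: abs_le_iff)
        qed (use K1 eps_nn in auto)
        also have "-2 * \<epsilon>\<^sup>2 / (real K * (2 - (-2))\<^sup>2) = - 2 * real S * L"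
          unfolding eps2 using K1 by (simp add: field_simps)
        finally show ?thesis using fB_mean[of t H] t
          unfolding M_def sample_pmf_def by simp
      qed
      have "measure_pmf.prob M Bad \<le> (\<Sum>t\<in>{1..H}. measure_pmf.prob M (\<Union>B\<in>Pow {..<S}. {D. (\<Sum>k<K. fB P S t B (D k)) \<ge> \<epsilon>}))"
      proof -
        have "Bad = (\<Union>t\<in>{1..H}. \<Union>B\<in>Pow {..<S}. {D. (\<Sum>k<K. fB P S t B (D k)) \<ge> \<epsilon>})"
          unfolding Bad_def by auto
        then show ?thesis by (simp add: measure_pmf.finite_measure_subadditive_finite)
      qed
      also have "\<dots> \<le> (\<Sum>t\<in>{1..H}. \<Sum>B\<in>Pow {..<S}. measure_pmf.prob M {D. (\<Sum>k<K. fB P S t B (D k)) \<ge> \<epsilon>})"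
        by (intro sum_mono measure_pmf.finite_measure_subadditive_finite) auto
      also have "\<dots> \<le> (\<Sum>t\<in>{1..H}. \<Sum>B\<in>Pow {..<S}. exp (- 2 * real S * L))"
        by (intro sum_mono each) auto
      also have "\<dots> = real H * 2 ^ S * exp (- 2 * real S * L)"
        by (simp add: card_Pow)
      also have "\<dots> \<le> \<delta>"
        by (rule arith_final[OF H1 S2 d0 d1 L_def])
      finally show ?thesis by (rule prob_from_bad[OF good])
    qed
  qed
  then show "measure_pmf.prob (sample_pmf K mu pb P H)
      {D. \<forall>Q. valid_run S A H r pt P D K Q \<longrightarrow>
            (\<forall>t\<in>{1..H}.
               \<bar>inner_SA S A (rho D K t)
                  (\<lambda>s a. Zmat S A r pt D K t (Q (Suc t)) s a - Ymat S A r pt P t (Q (Suc t)) s a)\<bar>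
               \<le> 4 * real H * sqrt (real S * ln (real H * real S / \<delta>) / real K))}
      \<ge> 1 - \<delta>" unfolding M_def G_def R_def L_def .
qed simp


end
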